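(* For all integers $m\ge 2$ and $k\ge 1$, the complete $k$-partite graph $K_{m*k}$ (with $k$ parts, each of size $m$) satisfies \[\mathrm{ch}(K_{m*k})\ \ge\ 2k-\left\lceil\frac{2k-1}{m}\right\rceil\ \ge\ \left\lfloor\frac{2k(m-1)}{m}\right\rfloor .\]
   Context: A list assignment $L$ for a graph $G$ assigns to each vertex $v$ a set $L(v)$ of colors. An $L$-coloring is a proper coloring $f$ of $G$ with $f(v)\in L(v)$ for all $v$. $G$ is $r$-choosable if it has an $L$-coloring for every list assignment $L$ with $|L(v)|\ge r$ for all $v$; the choice number $\mathrm{ch}(G)$ is the least such $r$. $K_{m*k}$ denotes the complete multipartite graph with $k$ parts of size $m$. *)

theory Defs
  imports Complex_Main
begin

definition L_coloring :: "'v set \<Rightarrow> ('v \<Rightarrow> 'v \<Rightarrow> bool) \<Rightarrow> ('v \<Rightarrow> nat set) \<Rightarrow> ('v \<Rightarrow> nat) \<Rightarrow> bool" where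
  "L_coloring V E L f \<longleftrightarrow> (\<forall>v\<in>V. f v \<in> L v) \<and> (\<forall>u\<in>V. \<forall>v\<in>V. E u v \<longrightarrow> f u \<noteq> f v)"

definition choosable :: "'v set \<Rightarrow> ('v \<Rightarrow> 'v \<Rightarrow> bool) \<Rightarrow> nat \<Rightarrow> bool" where
  "choosable V E r \<longleftrightarrow>
     (\<forall>L. (\<forall>v\<in>V. finite (L v) \<and> card (L v) \<ge> r) \<longrightarrow> (\<exists>f. L_coloring V E L f))"

definition choice_number :: "'v set \<Rightarrow> ('v \<Rightarrow> 'v \<Rightarrow> bool) \<Rightarrow> nat" where
  "choice_number V E = (LEAST r. choosable V E r)"

text \<open>Complete multipartite graph K_{m*k}: vertices (i,j) with part index i < k and
position j < m; two vertices are adjacent iff they lie in different parts.\<close>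

definition Kmk_vertices :: "nat \<Rightarrow> nat \<Rightarrow> (nat \<times> nat) set" where
  "Kmk_vertices m k = {0..<k} \<times> {0..<m}"

definition Kmk_edge :: "(nat \<times> nat) \<Rightarrow> (nat \<times> nat) \<Rightarrow> bool" where
  "Kmk_edge u v \<longleftrightarrow> fst u \<noteq> fst v"

end

theory Submission
  imports Defs
begin

lemma greedy:
  assumes "finite V"
  shows "card V \<le> r \<Longrightarrow> (\<forall>v\<in>V. finite (L v) \<and> card (L v) \<ge> r)
     \<Longrightarrow> \<exists>f::'a\<Rightarrow>nat. (\<forall>v\<in>V. f v \<in> L v) \<and> inj_on f V"
  using assms
proof (induction V rule: finite_induct)
  case empty then show ?case by auto
next
  case (insert x F)
  then obtain f where f: "\<forall>v\<in>F. f v \<in> L v" "inj_on f F" by auto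
  have cF: "card F < r" using insert by simp
  have "card (L x) - card (f ` F) \<le> card (L x - f ` F)"
    using insert by (intro diff_card_le_card_Diff) auto
  moreover have "card (f ` F) \<le> card F" by (rule card_image_le) (use insert in auto)
  moreover have "card (L x) \<ge> r" using insert by auto
  ultimately have "card (L x - f ` F) > 0" using cF by linarith
  then obtain y where y: "y \<in> L x" "y \<notin> f ` F"
    by (metis Diff_iff card_gt_0_iff ex_in_conv)
  show ?case
    apply (rule exI[of _ "f(x:=y)"])
    using f y insert by (auto simp: inj_on_def)
qed

lemma exists_choosable: "choosable (Kmk_vertices m k) Kmk_edge (card (Kmk_vertices m k))"
  unfolding choosable_def
proof (intro allI impI)
  fix L :: "nat\<times>nat \<Rightarrow> nat set"
  assume "\<forall>v\<in>Kmk_vertices m k. finite (L v) \<and> card (L v) \<ge> card (Kmk_vertices m k)"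
  then obtain f where "\<forall>v\<in>Kmk_vertices m k. f v \<in> L v" "inj_on f (Kmk_vertices m k)"
    using greedy[of "Kmk_vertices m k" "card (Kmk_vertices m k)" L]
    by (auto simp: Kmk_vertices_def)
  then show "\<exists>f. L_coloring (Kmk_vertices m k) Kmk_edge L f"
    unfolding L_coloring_def Kmk_edge_def by (metis inj_on_def)
qed

lemma div_iff: "(0::nat) < c \<Longrightarrow> (x div c = j) = (j*c \<le> x \<and> x < (j+1)*c)"
  by (meson div_less_iff_less_mult le_antisym less_add_one
    less_eq_div_iff_mult_less_eq less_inc_imp_less_eq)

lemma not_choosable:
  fixes m k n c :: nat
  assumes m: "m \<ge> 1" and n: "n = 2*k - 1" and c: "c \<ge> 1" and nc: "n \<le> m * c" and k: "k \<ge> 1"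
  shows "\<not> choosable (Kmk_vertices m k) Kmk_edge (n - c)"
proof
  define L where "L = (\<lambda>v::nat\<times>nat. {x. x < n \<and> x div c \<noteq> snd v})"
  assume "choosable (Kmk_vertices m k) Kmk_edge (n - c)"
  moreover have "\<forall>v\<in>Kmk_vertices m k. finite (L v) \<and> card (L v) \<ge> n - c"
  proof
    fix v :: "nat\<times>nat"
    have eq: "L v = {0..<n} - {snd v * c..<(snd v + 1)*c}"
    proof (rule set_eqI)
      fix x
      have "(x div c = snd v) = (snd v*c \<le> x \<and> x < (snd v+1)*c)"
        using c by (intro div_iff) simp
      then show "x \<in> L v \<longleftrightarrow> x \<in> {0..<n} - {snd v * c..<(snd v + 1)*c}"
        unfolding L_def by simp
    qed
    have "card {0..<n} - card {snd v * c..<(snd v + 1)*c} \<le> card (L v)"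
      unfolding eq by (rule diff_card_le_card_Diff) auto
    then show "finite (L v) \<and> card (L v) \<ge> n - c" unfolding L_def by auto
  qed
  ultimately obtain f where f: "L_coloring (Kmk_vertices m k) Kmk_edge L f"
    unfolding choosable_def by blast
  define S where "S = (\<lambda>i. f ` ({i} \<times> {0..<m}))"
  have Ssub: "S i \<subseteq> {0..<n}" if "i < k" for i
    using f that unfolding S_def L_coloring_def L_def Kmk_vertices_def by auto
  have Sdisj: "S i \<inter> S i' = {}" if "i < k" "i' < k" "i \<noteq> i'" for i i'
    using f that unfolding S_def L_coloring_def Kmk_vertices_def Kmk_edge_def by fastforce
  have S2: "card (S i) \<ge> 2" if i: "i < k" for i
  proof (rule ccontr)
    assume "\<not> 2 \<le> card (S i)"
    moreover have "S i \<noteq> {}" using m unfolding S_def by auto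
    moreover have "finite (S i)" unfolding S_def by auto
    moreover have "card (S i) > 0" using calculation by (simp add: card_gt_0_iff)
    ultimately have "card (S i) = 1" by linarith
    then obtain x where x: "S i = {x}" by (rule card_1_singletonE)
    have "f (i,0) \<in> S i" using m unfolding S_def by auto
    hence "x < n" using Ssub[OF i] x by auto
    hence "x < m * c" using nc by linarith
    hence "x div c < m" using c div_less_iff_less_mult[of c x m] by simp
    hence "f (i, x div c) \<in> S i" unfolding S_def by auto
    hence "f (i, x div c) = x" using x by auto
    moreover have "f (i, x div c) \<in> L (i, x div c)"
      using f i \<open>x div c < m\<close> unfolding L_coloring_def Kmk_vertices_def by auto
    ultimately show False unfolding L_def by auto
  qed
  have "card (\<Union>i\<in>{0..<k}. S i) = (\<Sum>i\<in>{0..<k}. card (S i))"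
    using Sdisj by (intro card_UN_disjoint) (auto simp: S_def)
  also have "\<dots> \<ge> (\<Sum>i\<in>{0..<k}. 2)" using S2 by (intro sum_mono) auto
  finally have "card (\<Union>i\<in>{0..<k}. S i) \<ge> 2 * k" by simp
  moreover have "card (\<Union>i\<in>{0..<k}. S i) \<le> n"
  proof -
    have "(\<Union>i\<in>{0..<k}. S i) \<subseteq> {0..<n}" using Ssub by (meson UN_least atLeastLessThan_iff)
    then show ?thesis using card_mono[of "{0..<n}" "\<Union>i\<in>{0..<k}. S i"] by simp
  qed
  ultimately show False using n k by linarith
qed

theorem mainTheorem2:
  fixes m k :: nat
  assumes "m \<ge> 2" and "k \<ge> 1"
  shows "real (choice_number (Kmk_vertices m k) Kmk_edge)
           \<ge> real (2 * k) - of_int \<lceil>(2 * real k - 1) / real m\<rceil>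
       \<and> real (2 * k) - of_int \<lceil>(2 * real k - 1) / real m\<rceil>
           \<ge> of_int \<lfloor>2 * real k * (real m - 1) / real m\<rfloor>"
proof
  define n where "n = 2*k - 1"
  define ci where "ci = \<lceil>(2 * real k - 1) / real m\<rceil>"
  define c where "c = nat ci"
  have rn: "real n = 2 * real k - 1" using assms unfolding n_def by auto
  have ci1: "ci \<ge> 1" unfolding ci_def using assms by (simp add: one_le_ceiling)
  hence cc: "int c = ci" "c \<ge> 1" unfolding c_def by auto
  have "(2 * real k - 1) / real m \<le> ci" unfolding ci_def by simp
  moreover have "real c = real_of_int ci" using cc by (metis of_int_of_nat_eq)
  ultimately have "real n \<le> real m * real c" using assms rn
    by (simp add: divide_le_eq mult.commute)
  hence nc: "n \<le> m * c" by (metis of_nat_le_iff of_nat_mult)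
  have "(2 * real k - 1) / real m \<le> (2 * real k - 1) / 1"
    using assms by (intro divide_left_mono) auto
  hence "ci \<le> int n" unfolding ci_def using rn by (simp add: ceiling_le_iff)
  hence cn: "c \<le> n" using cc by linarith
  have nch: "\<not> choosable (Kmk_vertices m k) Kmk_edge r" if "r \<le> n - c" for r
  proof
    assume "choosable (Kmk_vertices m k) Kmk_edge r"
    hence "choosable (Kmk_vertices m k) Kmk_edge (n - c)"
      unfolding choosable_def
    proof (intro allI impI)
      fix L :: "nat\<times>nat \<Rightarrow> nat set"
      assume A: "\<forall>L. (\<forall>v\<in>Kmk_vertices m k. finite (L v) \<and> r \<le> card (L v)) \<longrightarrow>
               (\<exists>f. L_coloring (Kmk_vertices m k) Kmk_edge L f)"
        and H: "\<forall>v\<in>Kmk_vertices m k. finite (L v) \<and> n - c \<le> card (L v)"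
      have "\<forall>v\<in>Kmk_vertices m k. finite (L v) \<and> r \<le> card (L v)"
        using H that by (meson le_trans)
      then show "\<exists>f. L_coloring (Kmk_vertices m k) Kmk_edge L f" using A by blast
    qed
    thus False using not_choosable[of m n k c] assms nc cc n_def by auto
  qed
  have "choosable (Kmk_vertices m k) Kmk_edge (choice_number (Kmk_vertices m k) Kmk_edge)"
    unfolding choice_number_def by (rule LeastI_ex) (use exists_choosable in blast)
  hence "choice_number (Kmk_vertices m k) Kmk_edge > n - c" using nch by (meson not_le)
  hence "choice_number (Kmk_vertices m k) Kmk_edge \<ge> 2*k - c" unfolding n_def by linarith
  hence "real (choice_number (Kmk_vertices m k) Kmk_edge) \<ge> real (2*k - c)" by simp
  moreover have "real (2*k - c) = real (2*k) - of_int ci" using cn cc n_def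
    by (metis diff_le_self le_trans of_int_of_nat_eq of_nat_diff)
  ultimately show "real (choice_number (Kmk_vertices m k) Kmk_edge)
           \<ge> real (2 * k) - of_int \<lceil>(2 * real k - 1) / real m\<rceil>" unfolding ci_def by simp
next
  define y where "y = 2 * real k * (real m - 1) / real m"
  define z where "z = (2 * real k - 1) / real m"
  have "y + z = 2 * real k - 1 / real m" unfolding y_def z_def using assms
    by (simp add: field_simps)
  moreover have "1 / real m > 0" using assms by simp
  moreover have "of_int \<lfloor>y\<rfloor> \<le> y" by simp
  moreover have "of_int \<lceil>z\<rceil> < z + 1" using ceiling_correct[of z] by linarith
  ultimately have "real_of_int \<lfloor>y\<rfloor> + real_of_int \<lceil>z\<rceil> < 2 * real k + 1" by linarith
  hence "real_of_int (\<lfloor>y\<rfloor> + \<lceil>z\<rceil>) < real_of_int (2 * int k + 1)" by simp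
  hence "\<lfloor>y\<rfloor> + \<lceil>z\<rceil> \<le> 2 * int k" by linarith
  hence "real_of_int (\<lfloor>y\<rfloor> + \<lceil>z\<rceil>) \<le> real_of_int (2 * int k)"
    by (simp only: of_int_le_iff)
  hence "real_of_int (\<lfloor>y\<rfloor>) \<le> real (2*k) - real_of_int \<lceil>z\<rceil>" by simp
  thus "real (2 * k) - of_int \<lceil>(2 * real k - 1) / real m\<rceil>
           \<ge> of_int \<lfloor>2 * real k * (real m - 1) / real m\<rfloor>" unfolding y_def z_def .
qed

end
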